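(* (i) If $\overline{\mathbb{Q}}$ is a valuation measure with respect to the basket, then the probability measures $\mathbb{Q}_i$ defined by $\frac{\mathrm d\mathbb{Q}_i}{\mathrm d\overline{\mathbb{Q}}}=\frac{\overline S_i(T)}{\overline S_i(0)}$, $i=1,\dots,d$, form a numéraire-consistent family and $\overline{\mathbb{Q}}=\sum_i\overline S_i(0)\mathbb{Q}_i$. (ii) Conversely, if $(\mathbb{Q}_i)_i$ is a numéraire-consistent family, then $\overline{\mathbb{Q}}:=\sum_i\overline S_i(0)\mathbb{Q}_i$ is a probability measure under which $\overline S$ is a martingale, and $\frac{\mathrm d\mathbb{Q}_i}{\mathrm d\overline{\mathbb{Q}}}=\frac{\overline S_i(T)}{\overline S_i(0)}$ for every $i$; equivalently $\mathbb{E}^{\overline{\mathbb{Q}}}[\overline S_i(t)\mathbf 1_A]=\overline S_i(0)\mathbb{Q}_i(A)$ for all $i$, $t\in[0,T]$, $A\in\mathcal F(t)$.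
   Context: Fix $T>0$, $d\in\mathbb N$, and a filtered space $(\Omega,\mathcal{F}(T),(\mathcal{F}(t))_{t\in[0,T]})$ with right-continuous filtration and trivial $\mathcal{F}(0)$. For $x,y\in[0,\infty]$ the product $xy$ is defined except when one is $0$ and the other is $\infty$. An exchange matrix is $s=(s_{i,j})\in[0,\infty]^{d\times d}$ with $s_{i,i}=1$ and $s_{i,j}s_{j,k}=s_{i,k}$ for all $i,j,k$ whenever the product is defined. $S=(S_{i,j})_{i,j=1}^d$ is a right-continuous adapted $[0,\infty]^{d\times d}$-valued process such that $S(t)$ is an exchange matrix for every $t$, with $\sum_jS_{i,j}(0)<\infty$ for all $i$. Basket prices: $\overline S_i=1/\sum_jS_{i,j}\in[0,1]$. A valuation measure with respect to the basket is a probability measure $\overline{\mathbb{Q}}$ on $(\Omega,\mathcal{F}(T))$ under which $\overline S=(\overline S_i)_i$ is a local martingale (equivalently a martingale). A family $(\mathbb{Q}_i)_{i=1}^d$ of probability measures on $(\Omega,\mathcal{F}(T))$ is numéraire-consistent if $\mathbb{E}^{\mathbb{Q}_i}[S_{i,j}(t)\mathbf{1}_A]=S_{i,j}(0)\,\mathbb{Q}_j(A\cap\{S_{j,i}(t)>0\})$ for all $i,j$, $t\in[0,T]$, $A\in\mathcal{F}(t)$. *)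

theory Defs
  imports "HOL-Probability.Probability"
begin

definition filtered_space :: "(real \<Rightarrow> 'a measure) \<Rightarrow> real \<Rightarrow> bool" where
  "filtered_space F T \<longleftrightarrow> T > 0
     \<and> (\<forall>t\<in>{0..T}. space (F t) = space (F T))
     \<and> (\<forall>s t. 0 \<le> s \<longrightarrow> s \<le> t \<longrightarrow> t \<le> T \<longrightarrow> sets (F s) \<subseteq> sets (F t))
     \<and> (\<forall>t\<in>{0..<T}. sets (F t) = (\<Inter>u\<in>{t<..T}. sets (F u)))
     \<and> sets (F 0) = {{}, space (F 0)}"

text \<open>Exchange matrix with entries in [0,\<infinity>] (ennreal); the product relation is only required
  when it is defined, i.e. not of the form 0 * \<infinity> or \<infinity> * 0.\<close>
definition exchange_matrix :: "('i \<Rightarrow> 'i \<Rightarrow> ennreal) \<Rightarrow> bool" where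
  "exchange_matrix s \<longleftrightarrow> (\<forall>i. s i i = 1)
     \<and> (\<forall>i j k. \<not> (s i j = 0 \<and> s j k = \<infinity>) \<and> \<not> (s i j = \<infinity> \<and> s j k = 0)
                 \<longrightarrow> s i j * s j k = s i k)"

text \<open>Initial (deterministic, since F(0) is trivial) value S(0).\<close>
definition init_val :: "(real \<Rightarrow> 'a measure) \<Rightarrow> (real \<Rightarrow> 'a \<Rightarrow> 'i \<Rightarrow> 'i \<Rightarrow> ennreal) \<Rightarrow> 'i \<Rightarrow> 'i \<Rightarrow> ennreal" where
  "init_val F S i j = S 0 (SOME \<omega>. \<omega> \<in> space (F 0)) i j"

definition exchange_process ::
  "(real \<Rightarrow> 'a measure) \<Rightarrow> real \<Rightarrow> (real \<Rightarrow> 'a \<Rightarrow> 'i::finite \<Rightarrow> 'i \<Rightarrow> ennreal) \<Rightarrow> bool" where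
  "exchange_process F T S \<longleftrightarrow>
     (\<forall>t\<in>{0..T}. \<forall>\<omega>\<in>space (F T). exchange_matrix (S t \<omega>))
     \<and> (\<forall>t\<in>{0..T}. \<forall>i j. (\<lambda>\<omega>. S t \<omega> i j) \<in> borel_measurable (F t))
     \<and> (\<forall>t\<in>{0..<T}. \<forall>\<omega>\<in>space (F T). \<forall>i j.
          ((\<lambda>u. S u \<omega> i j) \<longlongrightarrow> S t \<omega> i j) (at_right t))
     \<and> (\<forall>\<omega>\<in>space (F T). \<forall>i. (\<Sum>j\<in>UNIV. S 0 \<omega> i j) < \<infinity>)"

text \<open>Basket price  Sbar_i = 1 / sum_j S_ij, a value in [0,1] (1/\<infinity> = 0).\<close>
definition basket :: "(real \<Rightarrow> 'a \<Rightarrow> 'i::finite \<Rightarrow> 'i \<Rightarrow> ennreal) \<Rightarrow> real \<Rightarrow> 'a \<Rightarrow> 'i \<Rightarrow> real" where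
  "basket S t \<omega> i = enn2real (inverse (\<Sum>j\<in>UNIV. S t \<omega> i j))"

definition basket0 :: "(real \<Rightarrow> 'a measure) \<Rightarrow> (real \<Rightarrow> 'a \<Rightarrow> 'i::finite \<Rightarrow> 'i \<Rightarrow> ennreal) \<Rightarrow> 'i \<Rightarrow> real" where
  "basket0 F S i = enn2real (inverse (\<Sum>j\<in>UNIV. init_val F S i j))"

definition martingale :: "'a measure \<Rightarrow> (real \<Rightarrow> 'a measure) \<Rightarrow> real \<Rightarrow> (real \<Rightarrow> 'a \<Rightarrow> real) \<Rightarrow> bool" where
  "martingale M F T X \<longleftrightarrow>
     (\<forall>t\<in>{0..T}. X t \<in> borel_measurable (F t) \<and> integrable M (X t))
     \<and> (\<forall>s t A. 0 \<le> s \<longrightarrow> s \<le> t \<longrightarrow> t \<le> T \<longrightarrow> A \<in> sets (F s) \<longrightarrow>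
          (\<integral>\<omega>. indicator A \<omega> * X t \<omega> \<partial>M) = (\<integral>\<omega>. indicator A \<omega> * X s \<omega> \<partial>M))"

definition prob_on :: "(real \<Rightarrow> 'a measure) \<Rightarrow> real \<Rightarrow> 'a measure \<Rightarrow> bool" where
  "prob_on F T Q \<longleftrightarrow> prob_space Q \<and> sets Q = sets (F T)"

definition valuation_measure ::
  "(real \<Rightarrow> 'a measure) \<Rightarrow> real \<Rightarrow> (real \<Rightarrow> 'a \<Rightarrow> 'i::finite \<Rightarrow> 'i \<Rightarrow> ennreal) \<Rightarrow> 'a measure \<Rightarrow> bool" where
  "valuation_measure F T S Qb \<longleftrightarrow> prob_on F T Qb \<and> (\<forall>i. martingale Qb F T (\<lambda>t \<omega>. basket S t \<omega> i))"

definition numeraire_consistent ::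
  "(real \<Rightarrow> 'a measure) \<Rightarrow> real \<Rightarrow> (real \<Rightarrow> 'a \<Rightarrow> 'i::finite \<Rightarrow> 'i \<Rightarrow> ennreal) \<Rightarrow> ('i \<Rightarrow> 'a measure) \<Rightarrow> bool" where
  "numeraire_consistent F T S Q \<longleftrightarrow> (\<forall>i. prob_on F T (Q i))
     \<and> (\<forall>i j. \<forall>t\<in>{0..T}. \<forall>A\<in>sets (F t).
          (\<integral>\<^sup>+ \<omega>. S t \<omega> i j * indicator A \<omega> \<partial>Q i)
          = init_val F S i j * emeasure (Q j) (A \<inter> {\<omega>\<in>space (F T). S t \<omega> j i > 0}))"

end

theory Submission
  imports Defs
begin


lemma emD: "exchange_matrix s \<Longrightarrow> \<not> (s i j = 0 \<and> s j k = \<top>) \<Longrightarrow> \<not> (s i j = \<top> \<and> s j k = 0) \<Longrightarrow> s i j * s j k = s i k"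
  unfolding exchange_matrix_def infinity_ennreal_def by blast

lemma emI: "exchange_matrix s \<Longrightarrow> s i i = 1"
  unfolding exchange_matrix_def by blast

lemma em_0_inf: "exchange_matrix s \<Longrightarrow> s i j = 0 \<Longrightarrow> s j i = \<top>"
proof (rule ccontr)
  assume e: "exchange_matrix s" and z: "s i j = 0" and n: "s j i \<noteq> \<top>"
  have "s j i * s i j = s j j" using emD[OF e, of j i j] z n by auto
  then show False using z emI[OF e, of j] by simp
qed

lemma em_inf_0: "exchange_matrix s \<Longrightarrow> s i j = \<top> \<Longrightarrow> s j i = 0"
proof (rule ccontr)
  assume e: "exchange_matrix s" and z: "s i j = \<top>" and n: "s j i \<noteq> 0"
  have "s i j * s j i = s i i" using emD[OF e, of i j i] z n by auto
  then show False using z n emI[OF e, of i] by (simp add: ennreal_top_mult)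
qed

lemma em_mult: "exchange_matrix s \<Longrightarrow> s i j \<noteq> 0 \<Longrightarrow> s i j \<noteq> \<top> \<Longrightarrow> s i j * s j k = s i k"
  by (rule emD) auto

lemma em_total: "exchange_matrix s \<Longrightarrow> s i j < \<top> \<or> s j i < \<top>"
  using em_inf_0 top.not_eq_extremum by fastforce

lemma em_trans: "exchange_matrix s \<Longrightarrow> s i j < \<top> \<Longrightarrow> s j k < \<top> \<Longrightarrow> s i k < \<top>"
proof -
  assume e: "exchange_matrix s" "s i j < \<top>" "s j k < \<top>"
  have "s i j * s j k = s i k" using e by (intro emD[OF e(1)]) auto
  moreover have "s i j * s j k < \<top>" using e by (simp add: ennreal_mult_less_top)
  ultimately show ?thesis by simp
qed

lemma sig_ge1: "exchange_matrix s \<Longrightarrow> 1 \<le> (\<Sum>k\<in>(UNIV::'i::finite set). s i k)"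
proof -
  assume "exchange_matrix s"
  then have "s i i = 1" unfolding exchange_matrix_def by auto
  then show ?thesis using member_le_sum[of i UNIV "s i"] by auto
qed

lemma em_key:
  fixes s :: "'i::finite \<Rightarrow> 'i \<Rightarrow> ennreal"
  assumes e: "exchange_matrix s"
  shows "s i j * inverse (\<Sum>k\<in>UNIV. s i k) = inverse (\<Sum>k\<in>UNIV. s j k) * (if 0 < s j i then 1 else 0)"
proof (cases "s i j = 0")
  case True
  then have "s j i = \<top>" using em_0_inf[OF e] by auto
  then have "(\<Sum>k\<in>UNIV. s j k) = \<top>" using member_le_sum[of i UNIV "s j"] by (simp add: top_unique)
  then show ?thesis using True by simp
next
  case False
  note nz = False
  show ?thesis
  proof (cases "s i j = \<top>")
    case True
    then have "s j i = 0" using em_inf_0[OF e] by auto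
    moreover have "(\<Sum>k\<in>UNIV. s i k) = \<top>" using True member_le_sum[of j UNIV "s i"] by (simp add: top_unique)
    ultimately show ?thesis by simp
  next
    case False
    have "s i j * s j i = 1" using em_mult[OF e nz False] emI[OF e] by auto
    then have pos: "0 < s j i" by (metis mult_zero_right not_gr_zero zero_neq_one)
    have a1: "0 < s i j" "s i j < \<top>" using nz False by (auto simp: top.not_eq_extremum zero_less_iff_neq_zero)
    have "(\<Sum>k\<in>UNIV. s i k) = s i j * (\<Sum>k\<in>UNIV. s j k)"
      by (simp add: sum_distrib_left em_mult[OF e nz False])
    then have "s i j * inverse (\<Sum>k\<in>UNIV. s i k) = s i j * (inverse (s i j) * inverse (\<Sum>k\<in>UNIV. s j k))"
      using a1 by (simp add: ennreal_inverse_mult')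
    also have "\<dots> = (s i j * inverse (s i j)) * inverse (\<Sum>k\<in>UNIV. s j k)" by (simp add: mult.assoc)
    also have "s i j * inverse (s i j) = 1" using a1 ennreal_divide_self[of "s i j"]
      by (simp add: divide_ennreal_def)
    finally show ?thesis using pos by simp
  qed
qed

lemma em_top_ex:
  fixes s :: "'i::finite \<Rightarrow> 'i \<Rightarrow> ennreal"
  assumes e: "exchange_matrix s"
  shows "\<exists>i0. \<forall>j. s i0 j < \<top>"
proof -
  have "\<forall>A::'i set. finite A \<longrightarrow> A \<noteq> {} \<longrightarrow> (\<exists>i0\<in>A. \<forall>j\<in>A. s i0 j < \<top>)"
  proof (intro allI impI)
    fix A :: "'i set" assume "finite A" "A \<noteq> {}"
    then show "\<exists>i0\<in>A. \<forall>j\<in>A. s i0 j < \<top>"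
    proof (induction A rule: finite_ne_induct)
      case (singleton x)
      then show ?case using emI[OF e, of x] by auto
    next
      case (insert x F)
      then obtain i0 where i0: "i0 \<in> F" "\<forall>j\<in>F. s i0 j < \<top>" by auto
      show ?case
      proof (cases "s x i0 < \<top>")
        case True
        have "\<forall>j\<in>insert x F. s x j < \<top>"
          using True i0 em_trans[OF e, of x i0] emI[OF e, of x] by auto
        then show ?thesis by auto
      next
        case False
        then have "s i0 x < \<top>" using em_total[OF e, of x i0] by auto
        then have "\<forall>j\<in>insert x F. s i0 j < \<top>" using i0 by auto
        then show ?thesis using i0 by auto
      qed
    qed
  qed
  from this[rule_format, of UNIV] show ?thesis by simp
qed

lemma em_sum1:
  fixes s :: "'i::finite \<Rightarrow> 'i \<Rightarrow> ennreal"
  assumes e: "exchange_matrix s"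
  shows "(\<Sum>i\<in>UNIV. inverse (\<Sum>k\<in>UNIV. s i k)) = 1"
proof -
  obtain i0 where i0: "\<forall>j. s i0 j < \<top>" using em_top_ex[OF e] by auto
  have fin: "(\<Sum>k\<in>UNIV. s i0 k) < \<top>" using i0 by simp
  have ge: "1 \<le> (\<Sum>k\<in>UNIV. s i0 k)" using sig_ge1[OF e] by blast
  have each: "inverse (\<Sum>k\<in>UNIV. s i k) = s i0 i * inverse (\<Sum>k\<in>UNIV. s i0 k)" for i
  proof -
    have "s i i0 \<noteq> 0"
    proof
      assume "s i i0 = 0"
      then have "s i0 i = \<top>" by (rule em_0_inf[OF e])
      then show False using i0[rule_format, of i] by simp
    qed
    then have "0 < s i i0" by (simp add: zero_less_iff_neq_zero)
    then show ?thesis using em_key[OF e, of i0 i] by simp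
  qed
  have "(\<Sum>i\<in>UNIV. inverse (\<Sum>k\<in>UNIV. s i k)) = (\<Sum>i\<in>UNIV. s i0 i * inverse (\<Sum>k\<in>UNIV. s i0 k))"
    by (rule sum.cong[OF refl], rule each)
  also have "\<dots> = (\<Sum>i\<in>UNIV. s i0 i) * inverse (\<Sum>k\<in>UNIV. s i0 k)"
    by (simp add: sum_distrib_right)
  also have "\<dots> = 1"
  proof -
    have "(\<Sum>k\<in>UNIV. s i0 k) \<noteq> 0" using ge by (metis not_one_le_zero)
    then have "(\<Sum>k\<in>UNIV. s i0 k) / (\<Sum>k\<in>UNIV. s i0 k) = 1" using fin by (rule ennreal_divide_self)
    then show ?thesis by (simp only: divide_ennreal_def)
  qed
  finally show ?thesis .
qed

lemma enn_inv_le1: "1 \<le> (x::ennreal) \<Longrightarrow> inverse x \<le> 1"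
proof (cases x rule: ennreal_cases)
  case (real r)
  assume "1 \<le> x"
  then have "1 \<le> r" using real by simp
  then have "inverse r \<le> 1" by (simp add: inverse_le_1_iff)
  then show ?thesis using real \<open>1 \<le> r\<close> by (simp add: inverse_ennreal)
qed simp

lemma ennreal_enn2real_inv: "1 \<le> (x::ennreal) \<Longrightarrow> ennreal (enn2real (inverse x)) = inverse x"
proof -
  assume "1 \<le> x"
  then have "inverse x \<le> 1" by (rule enn_inv_le1)
  then have "inverse x < \<top>" using order.strict_trans1 ennreal_one_less_top by blast
  then show ?thesis by simp
qed



lemma nn_integral_agree_subalg:
  assumes s12: "sets M1 = sets M2" and sub1: "subalgebra M1 N"
    and eq: "\<And>A. A \<in> sets N \<Longrightarrow> emeasure M1 A = emeasure M2 A"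
    and f: "f \<in> borel_measurable N"
  shows "(\<integral>\<^sup>+x. f x \<partial>M1) = (\<integral>\<^sup>+x. f x \<partial>M2)"
proof -
  have sub2: "subalgebra M2 N" using sub1 s12 unfolding subalgebra_def
    by (metis sets_eq_imp_space_eq)
  have r: "restr_to_subalg M1 N = restr_to_subalg M2 N"
    by (rule measure_eqI) (simp_all add: sets_restr_to_subalg[OF sub1] sets_restr_to_subalg[OF sub2]
        emeasure_restr_to_subalg[OF sub1] emeasure_restr_to_subalg[OF sub2] eq)
  show ?thesis
    using nn_integral_subalgebra2[OF sub1 f] nn_integral_subalgebra2[OF sub2 f] r by simp
qed

locale summeas =
  fixes M :: "'a measure" and Q :: "'i::finite \<Rightarrow> 'a measure" and c :: "'i \<Rightarrow> ennreal"
  assumes sQ: "\<And>i. sets (Q i) = sets M"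
begin

definition "Qb = measure_of (space M) (sets M) (\<lambda>A. \<Sum>i\<in>UNIV. c i * emeasure (Q i) A)"

lemma spQ: "space (Q i) = space M" using sQ by (rule sets_eq_imp_space_eq)

lemma sets_Qb[simp, measurable_cong]: "sets Qb = sets M"
  unfolding Qb_def by (simp add: sets.sets_measure_of_eq)

lemma space_Qb[simp]: "space Qb = space M"
  unfolding Qb_def by (simp add: space_measure_of_conv)

lemma emeasure_Qb: "A \<in> sets M \<Longrightarrow> emeasure Qb A = (\<Sum>i\<in>UNIV. c i * emeasure (Q i) A)"
  unfolding Qb_def
proof (rule emeasure_measure_of_sigma)
  show "sigma_algebra (space M) (sets M)" by (rule sets.sigma_algebra_axioms)
  show "positive (sets M) (\<lambda>A. \<Sum>i\<in>UNIV. c i * emeasure (Q i) A)"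
    unfolding positive_def by simp
  show "countably_additive (sets M) (\<lambda>A. \<Sum>i\<in>UNIV. c i * emeasure (Q i) A)"
    unfolding countably_additive_def
  proof (intro allI impI)
    fix F :: "nat \<Rightarrow> 'a set" assume F: "range F \<subseteq> sets M" "disjoint_family F" "\<Union> (range F) \<in> sets M"
    have "(\<Sum>n. \<Sum>i\<in>UNIV. c i * emeasure (Q i) (F n)) = (\<Sum>i\<in>UNIV. \<Sum>n. c i * emeasure (Q i) (F n))"
      by (rule suminf_sum) simp
    also have "\<dots> = (\<Sum>i\<in>UNIV. c i * emeasure (Q i) (\<Union> (range F)))"
    proof (rule sum.cong[OF refl])
      fix i
      have "(\<Sum>n. emeasure (Q i) (F n)) = emeasure (Q i) (\<Union> (range F))"
        using F sQ[of i] by (intro suminf_emeasure) auto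
      then show "(\<Sum>n. c i * emeasure (Q i) (F n)) = c i * emeasure (Q i) (\<Union> (range F))"
        by simp
    qed
    finally show "(\<Sum>n. \<Sum>i\<in>UNIV. c i * emeasure (Q i) (F n)) = (\<Sum>i\<in>UNIV. c i * emeasure (Q i) (\<Union> (range F)))" .
  qed
qed

lemma nn_integral_Qb:
  assumes f: "f \<in> borel_measurable M"
  shows "(\<integral>\<^sup>+x. f x \<partial>Qb) = (\<Sum>i\<in>UNIV. c i * (\<integral>\<^sup>+x. f x \<partial>Q i))"
proof -
  have f': "f \<in> borel_measurable Qb" using f by (simp add: measurable_cong_sets[OF sets_Qb refl])
  from f' show ?thesis
  proof (induction rule: borel_measurable_induct)
    case (cong f g)
    have "(\<integral>\<^sup>+x. f x \<partial>Qb) = (\<integral>\<^sup>+x. g x \<partial>Qb)" using cong by (intro nn_integral_cong) auto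
    moreover have "(\<integral>\<^sup>+x. f x \<partial>Q i) = (\<integral>\<^sup>+x. g x \<partial>Q i)" for i
      using cong spQ by (intro nn_integral_cong) auto
    ultimately show ?case using cong by simp
  next
    case (set A)
    then show ?case using sQ emeasure_Qb[of A] by simp
  next
    case (mult u k)
    have mu: "u \<in> borel_measurable (Q i)" for i using mult by (simp add: measurable_cong_sets[OF sQ refl])
    show ?case using mult mu
      by (simp add: nn_integral_cmult sum_distrib_left ac_simps)
  next
    case (add u v)
    have mu: "u \<in> borel_measurable (Q i)" "v \<in> borel_measurable (Q i)" for i
      using add by (simp_all add: measurable_cong_sets[OF sQ refl])
    show ?case using add mu
      by (simp add: nn_integral_add sum.distrib distrib_left)
  next
    case (seq U)
    have mu: "U n \<in> borel_measurable (Q i)" for i n using seq by (simp add: measurable_cong_sets[OF sQ refl])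
    have "(\<integral>\<^sup>+x. (SUP n. U n) x \<partial>Qb) = (SUP n. (\<integral>\<^sup>+x. U n x \<partial>Qb))"
      unfolding SUP_apply using seq by (intro nn_integral_monotone_convergence_SUP) auto
    also have "\<dots> = (SUP n. \<Sum>i\<in>UNIV. c i * (\<integral>\<^sup>+x. U n x \<partial>Q i))" using seq by simp
    also have "\<dots> = (\<Sum>i\<in>UNIV. SUP n. c i * (\<integral>\<^sup>+x. U n x \<partial>Q i))"
    proof (rule ennreal_SUP_sum)
      fix i
      show "incseq (\<lambda>n. c i * (\<integral>\<^sup>+x. U n x \<partial>Q i))"
        unfolding incseq_def
      proof (intro allI impI)
        fix m n :: nat assume "m \<le> n"
        then have "U m \<le> U n" using \<open>incseq U\<close> by (simp add: incseq_def)
        then show "c i * (\<integral>\<^sup>+x. U m x \<partial>Q i) \<le> c i * (\<integral>\<^sup>+x. U n x \<partial>Q i)"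
          by (intro mult_left_mono nn_integral_mono) (auto simp: le_fun_def)
      qed
    qed
    also have "\<dots> = (\<Sum>i\<in>UNIV. c i * (\<integral>\<^sup>+x. (SUP n. U n) x \<partial>Q i))"
    proof (rule sum.cong[OF refl])
      fix i
      have "(\<integral>\<^sup>+x. (SUP n. U n) x \<partial>Q i) = (SUP n. (\<integral>\<^sup>+x. U n x \<partial>Q i))"
        unfolding SUP_apply using seq mu by (intro nn_integral_monotone_convergence_SUP) auto
      then show "(SUP n. c i * (\<integral>\<^sup>+x. U n x \<partial>Q i)) = c i * (\<integral>\<^sup>+x. (SUP n. U n) x \<partial>Q i)"
        by (simp add: SUP_mult_left_ennreal)
    qed
    finally show ?case .
  qed
qed

end

lemma nn_bochner:
  fixes f :: "'a \<Rightarrow> real"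
  assumes "integrable M f" "\<And>x. x \<in> space M \<Longrightarrow> 0 \<le> f x" "A \<in> sets M"
  shows "(\<integral>\<^sup>+x. ennreal (f x) * indicator A x \<partial>M) = ennreal (\<integral>x. f x * indicator A x \<partial>M)"
proof -
  have "(\<integral>\<^sup>+x. ennreal (f x) * indicator A x \<partial>M) = (\<integral>\<^sup>+x. ennreal (f x * indicator A x) \<partial>M)"
    by (intro nn_integral_cong) (simp split: split_indicator)
  also have "\<dots> = ennreal (\<integral>x. f x * indicator A x \<partial>M)"
    using assms by (intro nn_integral_eq_integral integrable_real_mult_indicator AE_I2)
      (auto split: split_indicator)
  finally show ?thesis .
qed

lemma inv_rel:
  fixes a b :: real and c :: ennreal
  assumes "0 < a" "0 < b" "c * ennreal a = ennreal b"
  shows "ennreal (1/a) = c * ennreal (1/b)"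
proof -
  have "c * ennreal (1/b) = c * (ennreal a * ennreal (1/a)) * ennreal (1/b)"
    using assms by (simp add: ennreal_mult[symmetric])
  also have "\<dots> = (c * ennreal a) * ennreal (1/a) * ennreal (1/b)" by (simp add: mult.assoc)
  also have "\<dots> = ennreal b * ennreal (1/a) * ennreal (1/b)" by (simp only: assms(3))
  also have "\<dots> = ennreal (b * (1/a) * (1/b))"
    using assms by (simp only: ennreal_mult[symmetric] less_imp_le divide_nonneg_nonneg zero_le_one mult_nonneg_nonneg)
  also have "\<dots> = ennreal (1/a)" using assms by simp
  finally show ?thesis ..
qed

lemma basket_meas:
  assumes "\<And>j. (\<lambda>\<omega>. S t \<omega> i j) \<in> borel_measurable M"
  shows "(\<lambda>\<omega>. basket S t \<omega> i) \<in> borel_measurable M"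
  unfolding basket_def using assms by measurable



theorem mainTheorem3:
  fixes F :: "real \<Rightarrow> 'a measure" and T :: real
    and S :: "real \<Rightarrow> 'a \<Rightarrow> 'i::finite \<Rightarrow> 'i \<Rightarrow> ennreal"
  assumes filt: "filtered_space F T"
    and proc: "exchange_process F T S"
  shows
   "(\<forall>Qb. valuation_measure F T S Qb \<longrightarrow>
       (let Q = (\<lambda>i. density Qb (\<lambda>\<omega>. ennreal (basket S T \<omega> i / basket0 F S i))) in
          numeraire_consistent F T S Q
          \<and> (\<forall>A\<in>sets (F T). emeasure Qb A = (\<Sum>i\<in>UNIV. ennreal (basket0 F S i) * emeasure (Q i) A))))
    \<and> (\<forall>Q. numeraire_consistent F T S Q \<longrightarrow>
       (let Qb = measure_of (space (F T)) (sets (F T))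
                   (\<lambda>A. \<Sum>i\<in>UNIV. ennreal (basket0 F S i) * emeasure (Q i) A) in
          valuation_measure F T S Qb
          \<and> (\<forall>i. Q i = density Qb (\<lambda>\<omega>. ennreal (basket S T \<omega> i / basket0 F S i)))
          \<and> (\<forall>i. \<forall>t\<in>{0..T}. \<forall>A\<in>sets (F t).
               (\<integral>\<omega>. basket S t \<omega> i * indicator A \<omega> \<partial>Qb) = basket0 F S i * measure (Q i) A)))"
proof -
  have fsd: "T > 0
     \<and> (\<forall>t\<in>{0..T}. space (F t) = space (F T))
     \<and> (\<forall>s t. 0 \<le> s \<longrightarrow> s \<le> t \<longrightarrow> t \<le> T \<longrightarrow> sets (F s) \<subseteq> sets (F t))
     \<and> (\<forall>t\<in>{0..<T}. sets (F t) = (\<Inter>u\<in>{t<..T}. sets (F u)))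
     \<and> sets (F 0) = {{}, space (F 0)}" using filt unfolding filtered_space_def by assumption
  have T0: "0 < T" using fsd by (rule conjunct1)
  have spF0: "\<forall>t\<in>{0..T}. space (F t) = space (F T)" using fsd[THEN conjunct2] by (rule conjunct1)
  have monoF0: "\<forall>s t. 0 \<le> s \<longrightarrow> s \<le> t \<longrightarrow> t \<le> T \<longrightarrow> sets (F s) \<subseteq> sets (F t)"
    using fsd[THEN conjunct2, THEN conjunct2] by (rule conjunct1)
  have triv: "sets (F 0) = {{}, space (F 0)}"
    using fsd[THEN conjunct2, THEN conjunct2, THEN conjunct2] by (rule conjunct2)
  have spF: "\<And>t. t \<in> {0..T} \<Longrightarrow> space (F t) = space (F T)" using spF0 by blast
  have monoF: "\<And>s t. 0 \<le> s \<Longrightarrow> s \<le> t \<Longrightarrow> t \<le> T \<Longrightarrow> sets (F s) \<subseteq> sets (F t)"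
    using monoF0 by blast
  have em: "\<And>t \<omega>. t \<in> {0..T} \<Longrightarrow> \<omega> \<in> space (F T) \<Longrightarrow> exchange_matrix (S t \<omega>)"
    using proc unfolding exchange_process_def by blast
  have Smeas: "\<And>t i j. t \<in> {0..T} \<Longrightarrow> (\<lambda>\<omega>. S t \<omega> i j) \<in> borel_measurable (F t)"
    using proc unfolding exchange_process_def by blast
  have fin0: "\<And>\<omega> i. \<omega> \<in> space (F T) \<Longrightarrow> (\<Sum>j\<in>UNIV. S 0 \<omega> i j) < \<top>"
    using proc unfolding exchange_process_def infinity_ennreal_def by blast
  have T0': "0 \<in> {0..T}" "T \<in> {0..T}" using T0 by auto
  have sub: "subalgebra (F T) (F t)" if "t \<in> {0..T}" for t
    unfolding subalgebra_def
  proof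
    show "space (F t) = space (F T)" by (rule spF[OF that])
    show "sets (F t) \<subseteq> sets (F T)" using that by (intro monoF) auto
  qed
  have setsT: "\<And>t A. t \<in> {0..T} \<Longrightarrow> A \<in> sets (F t) \<Longrightarrow> A \<in> sets (F T)"
    using sub unfolding subalgebra_def by auto
  have const0: "S 0 \<omega> i j = init_val F S i j" if \<omega>: "\<omega> \<in> space (F T)" for \<omega> i j
  proof -
    have sp0: "space (F 0) = space (F T)" by (rule spF[OF T0'(1)])
    define w where "w = (SOME \<omega>. \<omega> \<in> space (F 0))"
    have w: "w \<in> space (F 0)" unfolding w_def using \<omega> sp0 by (metis someI_ex)
    have "(\<lambda>\<omega>. S 0 \<omega> i j) -` {S 0 w i j} \<inter> space (F 0) \<in> sets (F 0)"
      using Smeas[OF T0'(1)] by (rule measurable_sets) simp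
    moreover have "w \<in> (\<lambda>\<omega>. S 0 \<omega> i j) -` {S 0 w i j} \<inter> space (F 0)" using w by simp
    ultimately have X: "(\<lambda>\<omega>. S 0 \<omega> i j) -` {S 0 w i j} \<inter> space (F 0) = space (F 0)"
      using triv by (metis empty_iff insert_iff)
    have "\<omega> \<in> space (F 0)" using \<omega> sp0 by simp
    then have "\<omega> \<in> (\<lambda>\<omega>. S 0 \<omega> i j) -` {S 0 w i j} \<inter> space (F 0)" by (subst X)
    then have "\<omega> \<in> (\<lambda>\<omega>. S 0 \<omega> i j) -` {S 0 w i j}" by (rule IntD1)
    then have "S 0 \<omega> i j = S 0 w i j" by (simp only: vimage_singleton_eq)
    then show ?thesis unfolding init_val_def w_def .
  qed
  have init_em: "exchange_matrix (init_val F S)" if ne: "space (F T) \<noteq> {}"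
  proof -
    obtain \<omega> where \<omega>: "\<omega> \<in> space (F T)" using ne by auto
    have "init_val F S = S 0 \<omega>" using const0[OF \<omega>] by (intro ext) simp
    then show ?thesis using em[OF T0'(1) \<omega>] by simp
  qed
  have init_fin: "(\<Sum>j\<in>UNIV. init_val F S i j) < \<top>" if ne: "space (F T) \<noteq> {}" for i
  proof -
    obtain \<omega> where \<omega>: "\<omega> \<in> space (F T)" using ne by auto
    show ?thesis using fin0[OF \<omega>, of i] const0[OF \<omega>] by simp
  qed
  have init_fin1: "init_val F S i j < \<top>" if ne: "space (F T) \<noteq> {}" for i j
    using init_fin[OF ne, of i] by simp
  have b0e: "ennreal (basket0 F S i) = inverse (\<Sum>j\<in>UNIV. init_val F S i j)" if ne: "space (F T) \<noteq> {}" for i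
    unfolding basket0_def using ennreal_enn2real_inv sig_ge1[OF init_em[OF ne]] by blast
  have b0pos: "0 < basket0 F S i" if ne: "space (F T) \<noteq> {}" for i
  proof -
    have "0 < inverse (\<Sum>j\<in>UNIV. init_val F S i j)"
      using init_fin[OF ne, of i] by (simp only: ennreal_inverse_positive less_top)
    then have "0 < ennreal (basket0 F S i)" using b0e[OF ne, of i] by simp
    then show ?thesis by simp
  qed
  have b0sum: "(\<Sum>i\<in>UNIV. ennreal (basket0 F S i)) = 1" if ne: "space (F T) \<noteq> {}"
    using em_sum1[OF init_em[OF ne]] b0e[OF ne] by simp
  have F9: "init_val F S i j * ennreal (basket0 F S i) = ennreal (basket0 F S j)" if ne: "space (F T) \<noteq> {}" for i j
  proof -
    have "init_val F S j i \<noteq> 0"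
    proof
      assume "init_val F S j i = 0"
      then have "init_val F S i j = \<top>" by (rule em_0_inf[OF init_em[OF ne]])
      then show False using init_fin1[OF ne, of i j] by simp
    qed
    then show ?thesis using em_key[OF init_em[OF ne], of i j] b0e[OF ne]
      by (simp add: zero_less_iff_neq_zero)
  qed
  have F9': "ennreal (1 / basket0 F S i) = init_val F S i j * ennreal (1 / basket0 F S j)" if ne: "space (F T) \<noteq> {}" for i j
    using inv_rel[OF b0pos[OF ne] b0pos[OF ne] F9[OF ne]] .
  have b0inv: "ennreal (basket0 F S i) * ennreal (1 / basket0 F S i) = 1" if ne: "space (F T) \<noteq> {}" for i
    using b0pos[OF ne, of i] by (simp add: ennreal_mult[symmetric])
  have bmeas: "(\<lambda>\<omega>. basket S t \<omega> i) \<in> borel_measurable (F t)" if "t \<in> {0..T}" for t i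
    using Smeas[OF that] by (rule basket_meas)
  have bmeasT: "(\<lambda>\<omega>. basket S t \<omega> i) \<in> borel_measurable (F T)" if "t \<in> {0..T}" for t i
    using measurable_from_subalg[OF sub[OF that] bmeas[OF that]] .
  have SmeasT: "(\<lambda>\<omega>. S t \<omega> i j) \<in> borel_measurable (F T)" if "t \<in> {0..T}" for t i j
    using measurable_from_subalg[OF sub[OF that] Smeas[OF that]] .
  have bnn: "0 \<le> basket S t \<omega> i" for t \<omega> i unfolding basket_def by simp
  have benn: "ennreal (basket S t \<omega> i) = inverse (\<Sum>j\<in>UNIV. S t \<omega> i j)"
    if "t \<in> {0..T}" "\<omega> \<in> space (F T)" for t \<omega> i
    unfolding basket_def using ennreal_enn2real_inv sig_ge1[OF em[OF that]] by blast
  have ble1: "basket S t \<omega> i \<le> 1" if "t \<in> {0..T}" "\<omega> \<in> space (F T)" for t \<omega> i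
  proof -
    have "ennreal (basket S t \<omega> i) \<le> 1" using benn[OF that] enn_inv_le1 sig_ge1[OF em[OF that]] by metis
    then show ?thesis by simp
  qed
  have F8: "S t \<omega> i j * ennreal (basket S t \<omega> i) = ennreal (basket S t \<omega> j) * (if 0 < S t \<omega> j i then 1 else 0)"
    if "t \<in> {0..T}" "\<omega> \<in> space (F T)" for t \<omega> i j
    using em_key[OF em[OF that], of i j] benn[OF that] by simp
  have F7: "(\<Sum>i\<in>UNIV. ennreal (basket S t \<omega> i)) = 1" if "t \<in> {0..T}" "\<omega> \<in> space (F T)" for t \<omega>
    using em_sum1[OF em[OF that]] benn[OF that] by simp
  have b0eq: "basket S 0 \<omega> i = basket0 F S i" if "\<omega> \<in> space (F T)" for \<omega> i
    unfolding basket_def basket0_def using const0[OF that] by simp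
  have part1: "\<forall>Qb. valuation_measure F T S Qb \<longrightarrow>
       (let Q = (\<lambda>i. density Qb (\<lambda>\<omega>. ennreal (basket S T \<omega> i / basket0 F S i))) in
          numeraire_consistent F T S Q
          \<and> (\<forall>A\<in>sets (F T). emeasure Qb A = (\<Sum>i\<in>UNIV. ennreal (basket0 F S i) * emeasure (Q i) A)))"
  proof (intro allI impI)
    fix Qb assume vm: "valuation_measure F T S Qb"
    have ps: "prob_space Qb" and sQb: "sets Qb = sets (F T)"
      using vm unfolding valuation_measure_def prob_on_def by blast+
    have mart: "martingale Qb F T (\<lambda>t \<omega>. basket S t \<omega> i)" for i
      using vm unfolding valuation_measure_def by blast
    have spQb: "space Qb = space (F T)" using sQb by (rule sets_eq_imp_space_eq)
    have ne: "space (F T) \<noteq> {}" using prob_space.not_empty[OF ps] spQb by simp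
    have Xmeas: "(\<lambda>\<omega>. basket S t \<omega> i) \<in> borel_measurable Qb" if "t \<in> {0..T}" for t i
      using bmeasT[OF that] by (simp only: measurable_cong_sets[OF sQb refl])
    have Xint: "integrable Qb (\<lambda>\<omega>. basket S t \<omega> i)" if "t \<in> {0..T}" for t i
      using mart[of i] that unfolding martingale_def by blast
    have P1: "(\<integral>\<^sup>+\<omega>. ennreal (basket S T \<omega> i) * indicator A \<omega> \<partial>Qb) = (\<integral>\<^sup>+\<omega>. ennreal (basket S t \<omega> i) * indicator A \<omega> \<partial>Qb)"
      if t: "t \<in> {0..T}" and A: "A \<in> sets (F t)" for i t A
    proof -
      have AQ: "A \<in> sets Qb" using setsT[OF t A] sQb by simp
      have "(\<integral>\<omega>. indicator A \<omega> * basket S T \<omega> i \<partial>Qb) = (\<integral>\<omega>. indicator A \<omega> * basket S t \<omega> i \<partial>Qb)"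
        using mart[of i] t A unfolding martingale_def by auto
      then have eq: "(\<integral>\<omega>. basket S T \<omega> i * indicator A \<omega> \<partial>Qb) = (\<integral>\<omega>. basket S t \<omega> i * indicator A \<omega> \<partial>Qb)"
        by (simp add: mult.commute)
      show ?thesis
        using nn_bochner[OF Xint[OF T0'(2)] bnn AQ, of i] nn_bochner[OF Xint[OF t] bnn AQ, of i] eq by simp
    qed
    have P2: "(\<integral>\<^sup>+\<omega>. ennreal (basket S T \<omega> i) * g \<omega> \<partial>Qb) = (\<integral>\<^sup>+\<omega>. ennreal (basket S t \<omega> i) * g \<omega> \<partial>Qb)"
      if t: "t \<in> {0..T}" and g: "g \<in> borel_measurable (F t)" for i t g
    proof -
      have gQ: "g \<in> borel_measurable Qb"
        using measurable_from_subalg[OF sub[OF t] g] by (simp only: measurable_cong_sets[OF sQb refl])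
      have "(\<integral>\<^sup>+\<omega>. g \<omega> \<partial>density Qb (\<lambda>\<omega>. ennreal (basket S T \<omega> i))) = (\<integral>\<^sup>+\<omega>. g \<omega> \<partial>density Qb (\<lambda>\<omega>. ennreal (basket S t \<omega> i)))"
      proof (rule nn_integral_agree_subalg)
        show "sets (density Qb (\<lambda>\<omega>. ennreal (basket S T \<omega> i))) = sets (density Qb (\<lambda>\<omega>. ennreal (basket S t \<omega> i)))"
          by simp
        show "subalgebra (density Qb (\<lambda>\<omega>. ennreal (basket S T \<omega> i))) (F t)"
          using sub[OF t] unfolding subalgebra_def by (simp add: spQb sQb)
        show "g \<in> borel_measurable (F t)" by (rule g)
        fix A assume A: "A \<in> sets (F t)"
        have AQ: "A \<in> sets Qb" using setsT[OF t A] sQb by simp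
        show "emeasure (density Qb (\<lambda>\<omega>. ennreal (basket S T \<omega> i))) A = emeasure (density Qb (\<lambda>\<omega>. ennreal (basket S t \<omega> i))) A"
          using P1[OF t A, of i] AQ Xmeas[OF T0'(2)] Xmeas[OF t] by (simp add: emeasure_density)
      qed
      then show ?thesis using gQ Xmeas[OF T0'(2)] Xmeas[OF t] by (simp add: nn_integral_density)
    qed
    define Q where "Q = (\<lambda>i. density Qb (\<lambda>\<omega>. ennreal (basket S T \<omega> i / basket0 F S i)))"
    have sQ: "sets (Q i) = sets (F T)" for i unfolding Q_def using sQb by simp
    have spQ: "space (Q i) = space (F T)" for i unfolding Q_def using spQb by simp
    have Qdens: "(\<integral>\<^sup>+\<omega>. f \<omega> \<partial>Q i) = ennreal (1 / basket0 F S i) * (\<integral>\<^sup>+\<omega>. ennreal (basket S T \<omega> i) * f \<omega> \<partial>Qb)"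
      if f: "f \<in> borel_measurable Qb" for f i
    proof -
      have "(\<integral>\<^sup>+\<omega>. f \<omega> \<partial>Q i) = (\<integral>\<^sup>+\<omega>. ennreal (basket S T \<omega> i / basket0 F S i) * f \<omega> \<partial>Qb)"
        unfolding Q_def using f Xmeas[OF T0'(2)] by (simp add: nn_integral_density)
      also have "\<dots> = (\<integral>\<^sup>+\<omega>. ennreal (1 / basket0 F S i) * (ennreal (basket S T \<omega> i) * f \<omega>) \<partial>Qb)"
      proof (rule nn_integral_cong)
        fix \<omega>
        have "ennreal (basket S T \<omega> i / basket0 F S i) = ennreal (1 / basket0 F S i) * ennreal (basket S T \<omega> i)"
          using b0pos[OF ne, of i] bnn[of T \<omega> i] by (simp add: ennreal_mult[symmetric])
        then show "ennreal (basket S T \<omega> i / basket0 F S i) * f \<omega> = ennreal (1 / basket0 F S i) * (ennreal (basket S T \<omega> i) * f \<omega>)"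
          by (simp add: mult.assoc)
      qed
      also have "\<dots> = ennreal (1 / basket0 F S i) * (\<integral>\<^sup>+\<omega>. ennreal (basket S T \<omega> i) * f \<omega> \<partial>Qb)"
        using f Xmeas[OF T0'(2)] by (simp add: nn_integral_cmult)
      finally show ?thesis .
    qed
    have QA: "emeasure (Q i) A = ennreal (1 / basket0 F S i) * (\<integral>\<^sup>+\<omega>. ennreal (basket S T \<omega> i) * indicator A \<omega> \<partial>Qb)"
      if A: "A \<in> sets (F T)" for A i
    proof -
      have "emeasure (Q i) A = (\<integral>\<^sup>+\<omega>. indicator A \<omega> \<partial>Q i)" using A sQ by simp
      also have "\<dots> = ennreal (1 / basket0 F S i) * (\<integral>\<^sup>+\<omega>. ennreal (basket S T \<omega> i) * indicator A \<omega> \<partial>Qb)"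
        using A sQb by (intro Qdens) simp
      finally show ?thesis .
    qed
    have cons: "numeraire_consistent F T S Q"
      unfolding numeraire_consistent_def
    proof (intro conjI allI ballI)
      fix i
      show "prob_on F T (Q i)" unfolding prob_on_def
      proof
        show "sets (Q i) = sets (F T)" by (rule sQ)
        have Om0: "space (F T) \<in> sets (F 0)" using spF[OF T0'(1)] by (metis sets.top)
        have "emeasure (Q i) (space (Q i)) = ennreal (1 / basket0 F S i) * (\<integral>\<^sup>+\<omega>. ennreal (basket S T \<omega> i) * indicator (space (F T)) \<omega> \<partial>Qb)"
          using QA[of "space (F T)" i] spQ by simp
        also have "\<dots> = ennreal (1 / basket0 F S i) * (\<integral>\<^sup>+\<omega>. ennreal (basket S 0 \<omega> i) * indicator (space (F T)) \<omega> \<partial>Qb)"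
          using P1[OF T0'(1) Om0, of i] by simp
        also have "(\<integral>\<^sup>+\<omega>. ennreal (basket S 0 \<omega> i) * indicator (space (F T)) \<omega> \<partial>Qb) = (\<integral>\<^sup>+\<omega>. ennreal (basket0 F S i) * indicator (space Qb) \<omega> \<partial>Qb)"
          by (intro nn_integral_cong) (simp add: b0eq spQb)
        also have "\<dots> = ennreal (basket0 F S i)"
          using prob_space.emeasure_space_1[OF ps] by (simp add: nn_integral_cmult_indicator)
        finally show "prob_space (Q i)" using b0inv[OF ne, of i] by (intro prob_spaceI) (simp add: mult.commute)
      qed
    next
      fix i j t A assume t: "t \<in> {0..T}" and A: "A \<in> sets (F t)"
      define B where "B = A \<inter> {\<omega> \<in> space (F T). 0 < S t \<omega> j i}"
      have B: "B \<in> sets (F t)"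
      proof -
        have "{\<omega> \<in> space (F t). 0 < S t \<omega> j i} \<in> sets (F t)"
          using Smeas[OF t] by measurable
        then show ?thesis unfolding B_def using A spF[OF t] by auto
      qed
      have AT: "A \<in> sets (F T)" by (rule setsT[OF t A])
      have BT: "B \<in> sets (F T)" by (rule setsT[OF t B])
      have gm: "(\<lambda>\<omega>. S t \<omega> i j * indicator A \<omega>) \<in> borel_measurable (F t)"
        using Smeas[OF t] A by measurable
      have gmQ: "(\<lambda>\<omega>. S t \<omega> i j * indicator A \<omega>) \<in> borel_measurable Qb"
        using measurable_from_subalg[OF sub[OF t] gm] by (simp only: measurable_cong_sets[OF sQb refl])
      have "(\<integral>\<^sup>+\<omega>. S t \<omega> i j * indicator A \<omega> \<partial>Q i)
          = ennreal (1 / basket0 F S i) * (\<integral>\<^sup>+\<omega>. ennreal (basket S T \<omega> i) * (S t \<omega> i j * indicator A \<omega>) \<partial>Qb)"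
        using gmQ by (rule Qdens)
      also have "(\<integral>\<^sup>+\<omega>. ennreal (basket S T \<omega> i) * (S t \<omega> i j * indicator A \<omega>) \<partial>Qb)
          = (\<integral>\<^sup>+\<omega>. ennreal (basket S t \<omega> i) * (S t \<omega> i j * indicator A \<omega>) \<partial>Qb)"
        using t gm by (rule P2)
      also have "\<dots> = (\<integral>\<^sup>+\<omega>. ennreal (basket S t \<omega> j) * indicator B \<omega> \<partial>Qb)"
      proof (rule nn_integral_cong)
        fix \<omega> assume "\<omega> \<in> space Qb"
        then have \<omega>: "\<omega> \<in> space (F T)" using spQb by simp
        have "ennreal (basket S t \<omega> i) * (S t \<omega> i j * indicator A \<omega>) = (S t \<omega> i j * ennreal (basket S t \<omega> i)) * indicator A \<omega>"
          by (simp add: ac_simps)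
        also have "\<dots> = ennreal (basket S t \<omega> j) * indicator B \<omega>"
          unfolding F8[OF t \<omega>] B_def using \<omega> by (simp split: split_indicator)
        finally show "ennreal (basket S t \<omega> i) * (S t \<omega> i j * indicator A \<omega>) = ennreal (basket S t \<omega> j) * indicator B \<omega>" .
      qed
      also have "\<dots> = (\<integral>\<^sup>+\<omega>. ennreal (basket S T \<omega> j) * indicator B \<omega> \<partial>Qb)"
        using P1[OF t B, of j] by simp
      finally have L: "(\<integral>\<^sup>+\<omega>. S t \<omega> i j * indicator A \<omega> \<partial>Q i)
          = ennreal (1 / basket0 F S i) * (\<integral>\<^sup>+\<omega>. ennreal (basket S T \<omega> j) * indicator B \<omega> \<partial>Qb)" .
      have R: "init_val F S i j * emeasure (Q j) B
          = init_val F S i j * ennreal (1 / basket0 F S j) * (\<integral>\<^sup>+\<omega>. ennreal (basket S T \<omega> j) * indicator B \<omega> \<partial>Qb)"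
        using QA[OF BT, of j] by (simp add: mult.assoc)
      show "(\<integral>\<^sup>+\<omega>. S t \<omega> i j * indicator A \<omega> \<partial>Q i) = init_val F S i j * emeasure (Q j) (A \<inter> {\<omega> \<in> space (F T). 0 < S t \<omega> j i})"
        using L R F9'[OF ne, of i j] unfolding B_def by simp
    qed
    have tot: "emeasure Qb A = (\<Sum>i\<in>UNIV. ennreal (basket0 F S i) * emeasure (Q i) A)"
      if A: "A \<in> sets (F T)" for A
    proof -
      have AQ: "A \<in> sets Qb" using A sQb by simp
      have "(\<Sum>i\<in>UNIV. ennreal (basket0 F S i) * emeasure (Q i) A)
          = (\<Sum>i\<in>UNIV. (\<integral>\<^sup>+\<omega>. ennreal (basket S T \<omega> i) * indicator A \<omega> \<partial>Qb))"
      proof (rule sum.cong[OF refl])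
        fix i
        show "ennreal (basket0 F S i) * emeasure (Q i) A = (\<integral>\<^sup>+\<omega>. ennreal (basket S T \<omega> i) * indicator A \<omega> \<partial>Qb)"
          using QA[OF A, of i] b0inv[OF ne, of i] by (simp add: mult.assoc[symmetric])
      qed
      also have "\<dots> = (\<integral>\<^sup>+\<omega>. (\<Sum>i\<in>UNIV. ennreal (basket S T \<omega> i) * indicator A \<omega>) \<partial>Qb)"
        using Xmeas[OF T0'(2)] AQ by (intro nn_integral_sum[symmetric]) simp
      also have "\<dots> = (\<integral>\<^sup>+\<omega>. indicator A \<omega> \<partial>Qb)"
      proof (rule nn_integral_cong)
        fix \<omega> assume "\<omega> \<in> space Qb"
        then have \<omega>: "\<omega> \<in> space (F T)" using spQb by simp
        show "(\<Sum>i\<in>UNIV. ennreal (basket S T \<omega> i) * indicator A \<omega>) = indicator A \<omega>"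
          using F7[OF T0'(2) \<omega>] by (simp add: sum_distrib_right[symmetric])
      qed
      also have "\<dots> = emeasure Qb A" using AQ by simp
      finally show ?thesis ..
    qed
    show "let Q = (\<lambda>i. density Qb (\<lambda>\<omega>. ennreal (basket S T \<omega> i / basket0 F S i))) in
          numeraire_consistent F T S Q
          \<and> (\<forall>A\<in>sets (F T). emeasure Qb A = (\<Sum>i\<in>UNIV. ennreal (basket0 F S i) * emeasure (Q i) A))"
      unfolding Let_def Q_def[symmetric] using cons tot by blast
  qed
  have part2: "\<forall>Q. numeraire_consistent F T S Q \<longrightarrow>
       (let Qb = measure_of (space (F T)) (sets (F T))
                   (\<lambda>A. \<Sum>i\<in>UNIV. ennreal (basket0 F S i) * emeasure (Q i) A) in
          valuation_measure F T S Qb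
          \<and> (\<forall>i. Q i = density Qb (\<lambda>\<omega>. ennreal (basket S T \<omega> i / basket0 F S i)))
          \<and> (\<forall>i. \<forall>t\<in>{0..T}. \<forall>A\<in>sets (F t).
               (\<integral>\<omega>. basket S t \<omega> i * indicator A \<omega> \<partial>Qb) = basket0 F S i * measure (Q i) A))"
  proof (intro allI impI)
    fix Q assume nc: "numeraire_consistent F T S Q"
    have pQ: "prob_space (Q i)" and sQ: "sets (Q i) = sets (F T)" for i
      using nc unfolding numeraire_consistent_def prob_on_def by blast+
    have cons: "(\<integral>\<^sup>+ \<omega>. S t \<omega> i j * indicator A \<omega> \<partial>Q i)
          = init_val F S i j * emeasure (Q j) (A \<inter> {\<omega>\<in>space (F T). S t \<omega> j i > 0})"
      if "t \<in> {0..T}" "A \<in> sets (F t)" for i j t A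
      using nc that unfolding numeraire_consistent_def by blast
    have spQ: "space (Q i) = space (F T)" for i using sQ by (rule sets_eq_imp_space_eq)
    have ne: "space (F T) \<noteq> {}" using prob_space.not_empty[OF pQ] spQ by metis
    interpret sm: summeas "F T" Q "\<lambda>i. ennreal (basket0 F S i)"
      by unfold_locales (rule sQ)
    have Qb_eq: "measure_of (space (F T)) (sets (F T)) (\<lambda>A. \<Sum>i\<in>UNIV. ennreal (basket0 F S i) * emeasure (Q i) A) = sm.Qb"
      unfolding sm.Qb_def ..
    have XmeasQ: "(\<lambda>\<omega>. basket S t \<omega> i) \<in> borel_measurable (Q j)" if "t \<in> {0..T}" for t i j
      using bmeasT[OF that] by (simp only: measurable_cong_sets[OF sQ refl])
    have C: "(\<integral>\<^sup>+\<omega>. ennreal (basket S t \<omega> i) * indicator A \<omega> \<partial>sm.Qb) = ennreal (basket0 F S i) * emeasure (Q i) A"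
      if t: "t \<in> {0..T}" and A: "A \<in> sets (F t)" for i t A
    proof -
      have AT: "A \<in> sets (F T)" by (rule setsT[OF t A])
      have trm: "ennreal (basket0 F S j) * (\<integral>\<^sup>+\<omega>. ennreal (basket S t \<omega> i) * indicator A \<omega> \<partial>Q j)
          = ennreal (basket0 F S i) * (\<integral>\<^sup>+\<omega>. ennreal (basket S t \<omega> j) * indicator A \<omega> \<partial>Q i)" for j
      proof -
        define N where "N = {\<omega> \<in> space (F T). S t \<omega> j i = \<top>}"
        have N: "N \<in> sets (F t)"
        proof -
          have "{\<omega> \<in> space (F t). S t \<omega> j i = \<top>} \<in> sets (F t)"
            using Smeas[OF t] by measurable
          then show ?thesis unfolding N_def using spF[OF t] by simp
        qed
        have NT: "N \<in> sets (F T)" by (rule setsT[OF t N])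
        have "(\<integral>\<^sup>+\<omega>. S t \<omega> j i * indicator N \<omega> \<partial>Q j) = (\<integral>\<^sup>+\<omega>. \<top> * indicator N \<omega> \<partial>Q j)"
          by (intro nn_integral_cong) (simp add: N_def split: split_indicator)
        also have "\<dots> = \<top> * emeasure (Q j) N" using NT sQ by (simp add: nn_integral_cmult_indicator)
        finally have "\<top> * emeasure (Q j) N = init_val F S j i * emeasure (Q i) (N \<inter> {\<omega>\<in>space (F T). S t \<omega> i j > 0})"
          using cons[OF t N, of j i] by simp
        also have "\<dots> < \<top>"
          using init_fin1[OF ne, of j i] finite_measure.emeasure_finite[OF prob_space.finite_measure[OF pQ[of i]]]
          by (simp add: ennreal_mult_less_top less_top)
        finally have "emeasure (Q j) N = 0" by (simp add: ennreal_top_mult split: if_splits)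
        then have Nnull: "N \<in> null_sets (Q j)" using NT sQ by auto
        have AEN: "AE \<omega> in Q j. \<omega> \<notin> N" by (rule AE_I'[OF Nnull]) auto
        have gm: "(\<lambda>\<omega>. ennreal (basket S t \<omega> j) * indicator A \<omega>) \<in> borel_measurable (F t)"
          using bmeas[OF t] A by measurable
        have "(\<integral>\<^sup>+\<omega>. ennreal (basket S t \<omega> i) * indicator A \<omega> \<partial>Q j)
            = (\<integral>\<^sup>+\<omega>. S t \<omega> j i * (ennreal (basket S t \<omega> j) * indicator A \<omega>) \<partial>Q j)"
        proof (rule nn_integral_cong_AE)
          show "AE \<omega> in Q j. ennreal (basket S t \<omega> i) * indicator A \<omega> = S t \<omega> j i * (ennreal (basket S t \<omega> j) * indicator A \<omega>)"
            using AEN AE_space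
          proof eventually_elim
            case (elim \<omega>)
            then have \<omega>: "\<omega> \<in> space (F T)" using spQ by simp
            have "S t \<omega> j i \<noteq> \<top>" using elim \<omega> unfolding N_def by simp
            then have "S t \<omega> i j \<noteq> 0" using em_0_inf[OF em[OF t \<omega>], of i j] by auto
            then have "S t \<omega> j i * ennreal (basket S t \<omega> j) = ennreal (basket S t \<omega> i)"
              using F8[OF t \<omega>, of j i] by (simp add: zero_less_iff_neq_zero)
            then show ?case by (simp add: mult.assoc[symmetric])
          qed
        qed
        also have "\<dots> = init_val F S j i * (\<integral>\<^sup>+\<omega>. indicator {\<omega>\<in>space (F T). 0 < S t \<omega> i j} \<omega> * (ennreal (basket S t \<omega> j) * indicator A \<omega>) \<partial>Q i)"
        proof -
          let ?P = "{\<omega>\<in>space (F T). 0 < S t \<omega> i j}"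
          have PT: "?P \<in> sets (F T)"
          proof -
            have "{\<omega> \<in> space (F t). 0 < S t \<omega> i j} \<in> sets (F t)"
              using Smeas[OF t] by measurable
            then have "?P \<in> sets (F t)" by (simp only: spF[OF t])
            then show ?thesis by (rule setsT[OF t])
          qed
          have m1: "(\<lambda>\<omega>. S t \<omega> j i) \<in> borel_measurable (Q j)"
            using SmeasT[OF t] by (simp only: measurable_cong_sets[OF sQ refl])
          have PQ: "?P \<in> sets (Q i)" using PT sQ by simp
          have m2: "(\<lambda>\<omega>. init_val F S j i * indicator ?P \<omega>) \<in> borel_measurable (Q i)"
            using PQ by (intro borel_measurable_times_ennreal borel_measurable_indicator borel_measurable_const)
          have gQ: "(\<lambda>\<omega>. ennreal (basket S t \<omega> j) * indicator A \<omega>) \<in> borel_measurable (Q k)" for k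
            using measurable_from_subalg[OF sub[OF t] gm] by (simp only: measurable_cong_sets[OF sQ refl])
          have "(\<integral>\<^sup>+\<omega>. ennreal (basket S t \<omega> j) * indicator A \<omega> \<partial>density (Q j) (\<lambda>\<omega>. S t \<omega> j i))
              = (\<integral>\<^sup>+\<omega>. ennreal (basket S t \<omega> j) * indicator A \<omega> \<partial>density (Q i) (\<lambda>\<omega>. init_val F S j i * indicator ?P \<omega>))"
          proof (rule nn_integral_agree_subalg)
            show "sets (density (Q j) (\<lambda>\<omega>. S t \<omega> j i)) = sets (density (Q i) (\<lambda>\<omega>. init_val F S j i * indicator ?P \<omega>))"
              using sQ by simp
            show "subalgebra (density (Q j) (\<lambda>\<omega>. S t \<omega> j i)) (F t)"
              using sub[OF t] unfolding subalgebra_def by (simp add: spQ sQ)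
            show "(\<lambda>\<omega>. ennreal (basket S t \<omega> j) * indicator A \<omega>) \<in> borel_measurable (F t)" by (rule gm)
            fix A' assume A': "A' \<in> sets (F t)"
            have A'T: "A' \<in> sets (F T)" by (rule setsT[OF t A'])
            have "emeasure (density (Q j) (\<lambda>\<omega>. S t \<omega> j i)) A' = (\<integral>\<^sup>+\<omega>. S t \<omega> j i * indicator A' \<omega> \<partial>Q j)"
              using m1 A'T sQ by (simp add: emeasure_density)
            also have "\<dots> = init_val F S j i * emeasure (Q i) (A' \<inter> ?P)" using cons[OF t A', of j i] by simp
            also have "\<dots> = (\<integral>\<^sup>+\<omega>. init_val F S j i * indicator (A' \<inter> ?P) \<omega> \<partial>Q i)"
              using A'T PT sQ by (simp add: nn_integral_cmult_indicator)
            also have "\<dots> = (\<integral>\<^sup>+\<omega>. init_val F S j i * indicator ?P \<omega> * indicator A' \<omega> \<partial>Q i)"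
              by (intro nn_integral_cong) (simp split: split_indicator)
            also have "\<dots> = emeasure (density (Q i) (\<lambda>\<omega>. init_val F S j i * indicator ?P \<omega>)) A'"
              using m2 A'T sQ by (simp add: emeasure_density)
            finally show "emeasure (density (Q j) (\<lambda>\<omega>. S t \<omega> j i)) A' = emeasure (density (Q i) (\<lambda>\<omega>. init_val F S j i * indicator ?P \<omega>)) A'" .
          qed
          then have "(\<integral>\<^sup>+\<omega>. S t \<omega> j i * (ennreal (basket S t \<omega> j) * indicator A \<omega>) \<partial>Q j)
              = (\<integral>\<^sup>+\<omega>. init_val F S j i * indicator ?P \<omega> * (ennreal (basket S t \<omega> j) * indicator A \<omega>) \<partial>Q i)"
            using m1 m2 gQ by (simp add: nn_integral_density)
          also have "\<dots> = (\<integral>\<^sup>+\<omega>. init_val F S j i * (indicator ?P \<omega> * (ennreal (basket S t \<omega> j) * indicator A \<omega>)) \<partial>Q i)"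
            by (simp add: mult.assoc)
          also have "\<dots> = init_val F S j i * (\<integral>\<^sup>+\<omega>. indicator ?P \<omega> * (ennreal (basket S t \<omega> j) * indicator A \<omega>) \<partial>Q i)"
            using borel_measurable_times_ennreal[OF borel_measurable_indicator[OF PQ] gQ[of i]] by (rule nn_integral_cmult)
          finally show ?thesis .
        qed
        also have "(\<integral>\<^sup>+\<omega>. indicator {\<omega>\<in>space (F T). 0 < S t \<omega> i j} \<omega> * (ennreal (basket S t \<omega> j) * indicator A \<omega>) \<partial>Q i)
            = (\<integral>\<^sup>+\<omega>. ennreal (basket S t \<omega> j) * indicator A \<omega> \<partial>Q i)"
        proof (rule nn_integral_cong)
          fix \<omega> assume "\<omega> \<in> space (Q i)"
          then have \<omega>: "\<omega> \<in> space (F T)" using spQ by simp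
          show "indicator {\<omega>\<in>space (F T). 0 < S t \<omega> i j} \<omega> * (ennreal (basket S t \<omega> j) * indicator A \<omega>)
              = ennreal (basket S t \<omega> j) * indicator A \<omega>"
          proof (cases "S t \<omega> i j = 0")
            case True
            then have "S t \<omega> j i = \<top>" by (rule em_0_inf[OF em[OF t \<omega>]])
            then have "ennreal (basket S t \<omega> j) = 0" using F8[OF t \<omega>, of i j] True by simp
            then show ?thesis by simp
          next
            case False
            then show ?thesis using \<omega> by (simp add: zero_less_iff_neq_zero)
          qed
        qed
        finally show ?thesis
          using F9[OF ne, of j i] by (simp add: mult.assoc[symmetric] mult.commute[of "ennreal (basket0 F S j)"])
      qed
      have fm: "(\<lambda>\<omega>. ennreal (basket S t \<omega> i) * indicator A \<omega>) \<in> borel_measurable (F T)"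
        using bmeasT[OF t] AT by measurable
      have "(\<integral>\<^sup>+\<omega>. ennreal (basket S t \<omega> i) * indicator A \<omega> \<partial>sm.Qb)
          = (\<Sum>j\<in>UNIV. ennreal (basket0 F S j) * (\<integral>\<^sup>+\<omega>. ennreal (basket S t \<omega> i) * indicator A \<omega> \<partial>Q j))"
        using fm by (rule sm.nn_integral_Qb)
      also have "\<dots> = (\<Sum>j\<in>UNIV. ennreal (basket0 F S i) * (\<integral>\<^sup>+\<omega>. ennreal (basket S t \<omega> j) * indicator A \<omega> \<partial>Q i))"
        by (rule sum.cong[OF refl], rule trm)
      also have "\<dots> = ennreal (basket0 F S i) * (\<Sum>j\<in>UNIV. (\<integral>\<^sup>+\<omega>. ennreal (basket S t \<omega> j) * indicator A \<omega> \<partial>Q i))"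
        by (simp only: sum_distrib_left)
      also have "(\<Sum>j\<in>UNIV. (\<integral>\<^sup>+\<omega>. ennreal (basket S t \<omega> j) * indicator A \<omega> \<partial>Q i)) = (\<integral>\<^sup>+\<omega>. (\<Sum>j\<in>UNIV. ennreal (basket S t \<omega> j) * indicator A \<omega>) \<partial>Q i)"
      proof (rule nn_integral_sum[symmetric])
        fix j
        have Aq: "A \<in> sets (Q i)" using AT sQ by simp
        show "(\<lambda>\<omega>. ennreal (basket S t \<omega> j) * indicator A \<omega>) \<in> borel_measurable (Q i)"
          using XmeasQ[OF t] Aq by measurable
      qed
      also have "(\<integral>\<^sup>+\<omega>. (\<Sum>j\<in>UNIV. ennreal (basket S t \<omega> j) * indicator A \<omega>) \<partial>Q i) = (\<integral>\<^sup>+\<omega>. indicator A \<omega> \<partial>Q i)"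
      proof (rule nn_integral_cong)
        fix \<omega> assume "\<omega> \<in> space (Q i)"
        then have \<omega>: "\<omega> \<in> space (F T)" using spQ by simp
        show "(\<Sum>j\<in>UNIV. ennreal (basket S t \<omega> j) * indicator A \<omega>) = indicator A \<omega>"
          using F7[OF t \<omega>] by (simp add: sum_distrib_right[symmetric])
      qed
      also have "\<dots> = emeasure (Q i) A" using AT sQ by simp
      finally show ?thesis .
    qed
    have sQb: "sets sm.Qb = sets (F T)" by simp
    have spQb: "space sm.Qb = space (F T)" by simp
    have psQb: "prob_space sm.Qb"
    proof
      have "emeasure sm.Qb (space sm.Qb) = (\<Sum>i\<in>UNIV. ennreal (basket0 F S i) * emeasure (Q i) (space (F T)))"
        by (simp add: sm.emeasure_Qb)
      also have "\<dots> = (\<Sum>i\<in>UNIV. ennreal (basket0 F S i))"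
        using prob_space.emeasure_space_1[OF pQ] spQ by simp
      also have "\<dots> = 1" by (rule b0sum[OF ne])
      finally show "emeasure sm.Qb (space sm.Qb) = 1" .
    qed
    have fmQb: "finite_measure sm.Qb" using psQb by (rule prob_space.finite_measure)
    have XmeasQb: "(\<lambda>\<omega>. basket S t \<omega> i) \<in> borel_measurable sm.Qb" if "t \<in> {0..T}" for t i
      using bmeasT[OF that] by (simp only: measurable_cong_sets[OF sQb refl])
    have XintQb: "integrable sm.Qb (\<lambda>\<omega>. basket S t \<omega> i)" if t: "t \<in> {0..T}" for t i
    proof (rule finite_measure.integrable_const_bound[OF fmQb, where B=1])
      show "AE x in sm.Qb. norm (basket S t x i) \<le> 1"
        using ble1[OF t] bnn by (intro AE_I2) (simp add: spQb)
      show "(\<lambda>\<omega>. basket S t \<omega> i) \<in> borel_measurable sm.Qb" by (rule XmeasQb[OF t])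
    qed
    have Cb: "(\<integral>\<omega>. basket S t \<omega> i * indicator A \<omega> \<partial>sm.Qb) = basket0 F S i * measure (Q i) A"
      if t: "t \<in> {0..T}" and A: "A \<in> sets (F t)" for i t A
    proof -
      have AQ: "A \<in> sets sm.Qb" using setsT[OF t A] by simp
      have "ennreal (\<integral>\<omega>. basket S t \<omega> i * indicator A \<omega> \<partial>sm.Qb) = ennreal (basket0 F S i) * emeasure (Q i) A"
        using nn_bochner[OF XintQb[OF t] bnn AQ, of i] C[OF t A, of i] by simp
      also have "\<dots> = ennreal (basket0 F S i * measure (Q i) A)"
        using b0pos[OF ne, of i] by (simp add: finite_measure.emeasure_eq_measure[OF prob_space.finite_measure[OF pQ]] ennreal_mult)
      finally show ?thesis
        using b0pos[OF ne, of i] bnn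
        by (subst (asm) ennreal_inj) (auto intro!: integral_nonneg_AE mult_nonneg_nonneg)
    qed
    have vmQb: "valuation_measure F T S sm.Qb"
      unfolding valuation_measure_def prob_on_def martingale_def
    proof (intro conjI allI impI ballI psQb sQb)
      fix i t assume t: "t \<in> {0..T}"
      show "(\<lambda>\<omega>. basket S t \<omega> i) \<in> borel_measurable (F t)" by (rule bmeas[OF t])
      show "integrable sm.Qb (\<lambda>\<omega>. basket S t \<omega> i)" by (rule XintQb[OF t])
    next
      fix i s t A assume st: "0 \<le> s" "s \<le> t" "t \<le> T" and A: "A \<in> sets (F s)"
      have t: "t \<in> {0..T}" and s: "s \<in> {0..T}" using st by auto
      have At: "A \<in> sets (F t)" using monoF[OF st] A by auto
      show "(\<integral>\<omega>. indicator A \<omega> * basket S t \<omega> i \<partial>sm.Qb) = (\<integral>\<omega>. indicator A \<omega> * basket S s \<omega> i \<partial>sm.Qb)"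
        using Cb[OF t At, of i] Cb[OF s A, of i] by (simp add: mult.commute)
    qed
    have dens: "Q i = density sm.Qb (\<lambda>\<omega>. ennreal (basket S T \<omega> i / basket0 F S i))" for i
    proof (rule measure_eqI)
      show "sets (Q i) = sets (density sm.Qb (\<lambda>\<omega>. ennreal (basket S T \<omega> i / basket0 F S i)))"
        using sQ by simp
      fix A assume "A \<in> sets (Q i)"
      then have AT: "A \<in> sets (F T)" using sQ by simp
      have "emeasure (density sm.Qb (\<lambda>\<omega>. ennreal (basket S T \<omega> i / basket0 F S i))) A
          = (\<integral>\<^sup>+\<omega>. ennreal (basket S T \<omega> i / basket0 F S i) * indicator A \<omega> \<partial>sm.Qb)"
        using XmeasQb[OF T0'(2)] AT by (simp add: emeasure_density)
      also have "\<dots> = (\<integral>\<^sup>+\<omega>. ennreal (1 / basket0 F S i) * (ennreal (basket S T \<omega> i) * indicator A \<omega>) \<partial>sm.Qb)"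
      proof (rule nn_integral_cong)
        fix \<omega>
        have "ennreal (basket S T \<omega> i / basket0 F S i) = ennreal (1 / basket0 F S i) * ennreal (basket S T \<omega> i)"
          using b0pos[OF ne, of i] bnn[of T \<omega> i] by (simp add: ennreal_mult[symmetric])
        then show "ennreal (basket S T \<omega> i / basket0 F S i) * indicator A \<omega> = ennreal (1 / basket0 F S i) * (ennreal (basket S T \<omega> i) * indicator A \<omega>)"
          by (simp add: mult.assoc)
      qed
      also have "\<dots> = ennreal (1 / basket0 F S i) * (\<integral>\<^sup>+\<omega>. ennreal (basket S T \<omega> i) * indicator A \<omega> \<partial>sm.Qb)"
        using XmeasQb[OF T0'(2)] AT by (intro nn_integral_cmult) simp
      also have "\<dots> = ennreal (1 / basket0 F S i) * (ennreal (basket0 F S i) * emeasure (Q i) A)"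
        using C[OF T0'(2) AT, of i] by simp
      also have "\<dots> = emeasure (Q i) A"
        using b0inv[OF ne, of i] by (simp add: mult.assoc[symmetric] mult.commute[of "ennreal (1 / basket0 F S i)"])
      finally show "emeasure (Q i) A = emeasure (density sm.Qb (\<lambda>\<omega>. ennreal (basket S T \<omega> i / basket0 F S i))) A" ..
    qed
    show "let Qb = measure_of (space (F T)) (sets (F T))
                   (\<lambda>A. \<Sum>i\<in>UNIV. ennreal (basket0 F S i) * emeasure (Q i) A) in
          valuation_measure F T S Qb
          \<and> (\<forall>i. Q i = density Qb (\<lambda>\<omega>. ennreal (basket S T \<omega> i / basket0 F S i)))
          \<and> (\<forall>i. \<forall>t\<in>{0..T}. \<forall>A\<in>sets (F t).
               (\<integral>\<omega>. basket S t \<omega> i * indicator A \<omega> \<partial>Qb) = basket0 F S i * measure (Q i) A)"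
      unfolding Let_def Qb_eq using vmQb dens Cb by blast
  qed
  show ?thesis by (rule conjI[OF part1 part2])
qed

end
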